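(* Let $X\subset\mathbb{R}^n$ be a closed set which is the closure of its interior, $f:X\to\mathbb{R}^n$ locally Lipschitz, and suppose $\dot x=f(x)$ is forward complete with flow $\varphi_t$. Let $K$ be a closed convex cone with nonempty interior and suppose the system is strongly monotone: $\xi_1\succ\xi_2$ implies $\varphi_t(\xi_1)\gg\varphi_t(\xi_2)$ for all $t>0$, $\xi_1,\xi_2\in X$. Let $v\in\operatorname{int}(K)$, $|v|=1$, with $X$ invariant under translation by $v$ and $\varphi_t(\xi+\lambda v)=\varphi_t(\xi)+\lambda v$ for all $\lambda\in\mathbb{R}$, $\xi\in X$, $t\ge0$. Let $V(x)=\inf\{\alpha\in\mathbb{R}:x\preceq\alpha v\}$. Then for all $\xi_1,\xi_2\in X$ and all $t>0$, $$V(\varphi_t(\xi_1)-\varphi_t(\xi_2))\le V(\xi_1-\xi_2),$$ and the inequality is strict whenever $\xi_1-\xi_2\notin\operatorname{span}\{v\}$.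
   Context: The cone $K$ satisfies $K+K\subset K$, $\alpha K\subset K$ for $\alpha\ge0$, $K\cap(-K)=\{0\}$. $\xi_1\succeq\xi_2$ iff $\xi_1-\xi_2\in K$; $\xi_1\succ\xi_2$ iff additionally $\xi_1\neq\xi_2$; $\xi_1\gg\xi_2$ iff $\xi_1-\xi_2\in\operatorname{int}(K)$. Forward complete means every solution is uniquely defined in $X$ on an interval containing $[0,\infty)$ in its interior. *)

theory Defs
  imports "HOL-Analysis.Analysis"
begin

definition kle :: "'a::real_normed_vector set \<Rightarrow> 'a \<Rightarrow> 'a \<Rightarrow> bool" where
  "kle K x y \<longleftrightarrow> y - x \<in> K"

definition klt :: "'a::real_normed_vector set \<Rightarrow> 'a \<Rightarrow> 'a \<Rightarrow> bool" where
  "klt K x y \<longleftrightarrow> kle K x y \<and> x \<noteq> y"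

definition kll :: "'a::real_normed_vector set \<Rightarrow> 'a \<Rightarrow> 'a \<Rightarrow> bool" where
  "kll K x y \<longleftrightarrow> y - x \<in> interior K"

definition locally_lipschitz_on :: "'a::metric_space set \<Rightarrow> ('a \<Rightarrow> 'b::metric_space) \<Rightarrow> bool" where
  "locally_lipschitz_on X f \<longleftrightarrow>
     (\<forall>x\<in>X. \<exists>u>0. \<exists>L. L-lipschitz_on (cball x u \<inter> X) f)"

definition ode_solution_on :: "('a::real_normed_vector \<Rightarrow> 'a) \<Rightarrow> 'a set \<Rightarrow> real set \<Rightarrow> (real \<Rightarrow> 'a) \<Rightarrow> bool" where
  "ode_solution_on f X I y \<longleftrightarrow> is_interval I \<and>
     (\<forall>t\<in>I. y t \<in> X \<and> (y has_vector_derivative f (y t)) (at t within I))"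

definition forward_complete_flow ::
  "('a::real_normed_vector \<Rightarrow> 'a) \<Rightarrow> 'a set \<Rightarrow> (real \<Rightarrow> 'a \<Rightarrow> 'a) \<Rightarrow> bool" where
  "forward_complete_flow f X phi \<longleftrightarrow>
     (\<forall>xi\<in>X. (\<exists>e>0. ode_solution_on f X {-e<..} (\<lambda>t. phi t xi)) \<and> phi 0 xi = xi \<and>
        (\<forall>I y. ode_solution_on f X I y \<and> 0 \<in> I \<and> y 0 = xi \<longrightarrow>
           (\<forall>t\<in>I. t \<ge> 0 \<longrightarrow> y t = phi t xi)))"

definition Vfun :: "'a::real_normed_vector set \<Rightarrow> 'a \<Rightarrow> 'a \<Rightarrow> real" where
  "Vfun K v x = Inf {\<alpha>. kle K x (\<alpha> *\<^sub>R v)}"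

end

theory Submission
  imports Defs
begin

locale kcone =
  fixes K :: "'a::real_normed_vector set" and v :: 'a
  assumes K_add: "\<forall>x\<in>K. \<forall>y\<in>K. x + y \<in> K"
    and K_cone: "cone K"
    and K_pointed: "K \<inter> uminus ` K = {0}"
    and K_closed: "closed K"
    and v_int: "v \<in> interior K"
    and v_norm: "norm v = 1"
begin

lemma scal: "x \<in> K \<Longrightarrow> c \<ge> 0 \<Longrightarrow> c *\<^sub>R x \<in> K"
  using K_cone unfolding cone_def by blast

lemma pointed: "x \<in> K \<Longrightarrow> - x \<in> K \<Longrightarrow> x = 0"
proof -
  assume a: "x \<in> K" "- x \<in> K"
  then have "x \<in> uminus ` K" by (metis image_eqI minus_minus)
  with a K_pointed show ?thesis by blast
qed

lemma v_ne: "v \<noteq> 0" using v_norm by auto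

lemma ball_e: obtains e where "e > 0" "e \<le> 1/2" "ball v e \<subseteq> K"
proof -
  obtain e where e: "e > 0" "ball v e \<subseteq> K"
    using v_int by (meson open_contains_ball_eq open_interior interior_subset subset_trans)
  show ?thesis
    apply (rule that[of "min e (1/2)"]) using e by auto
qed

definition S where "S x = {\<alpha>. \<alpha> *\<^sub>R v - x \<in> K}"

lemma S_ne: "S x \<noteq> {}"
proof -
  obtain e where e: "e > 0" "e \<le> 1/2" "ball v e \<subseteq> K" by (rule ball_e)
  define a where "a = norm x / e + 1"
  have a0: "a > 0" unfolding a_def using e by (simp add: add_nonneg_pos)
  have "norm x < e * a" unfolding a_def using e by (simp add: algebra_simps)
  then have "norm x / a < e" using a0 by (simp add: divide_less_eq mult.commute)
  then have "v - (1/a) *\<^sub>R x \<in> ball v e" using a0 by (simp add: dist_norm)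
  then have "v - (1/a) *\<^sub>R x \<in> K" using e by blast
  then have "a *\<^sub>R (v - (1/a) *\<^sub>R x) \<in> K" using a0 by (simp add: scal)
  then have "a *\<^sub>R v - x \<in> K" using a0 by (simp add: algebra_simps)
  then show ?thesis unfolding S_def by blast
qed

lemma S_bdd: "bdd_below (S x)"
proof -
  obtain e where e: "e > 0" "e \<le> 1/2" "ball v e \<subseteq> K" by (rule ball_e)
  have "\<alpha> \<ge> - norm x / e" if "\<alpha> \<in> S x" for \<alpha>
  proof (rule ccontr)
    assume "\<not> ?thesis"
    define b where "b = - \<alpha>"
    have bg: "b > norm x / e" using \<open>\<not> _\<close> b_def by simp
    have b0: "b > 0" proof -
      have "norm x / e \<ge> 0" using e by simp
      then show ?thesis using bg by linarith
    qed
    have "norm x < e * b" using bg e by (simp add: divide_less_eq mult.commute)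
    then have "norm x / b < e" using b0 by (simp add: divide_less_eq mult.commute)
    then have "v + (1/b) *\<^sub>R x \<in> ball v e" using b0 by (simp add: dist_norm)
    then have "v + (1/b) *\<^sub>R x \<in> K" using e by blast
    then have "b *\<^sub>R (v + (1/b) *\<^sub>R x) \<in> K" using b0 by (simp add: scal)
    then have k1: "b *\<^sub>R v + x \<in> K" using b0 by (simp add: algebra_simps)
    have k2: "- (b *\<^sub>R v + x) \<in> K" using that unfolding S_def b_def by (simp add: algebra_simps)
    have "b *\<^sub>R v + x = 0" using pointed k1 k2 by blast
    then have "x = - (b *\<^sub>R v)" by (simp add: eq_neg_iff_add_eq_0 add.commute)
    then have "norm x = b" using v_norm b0 by simp
    have "2 * b * e \<le> b" using e b0 by (simp add: mult_left_le)
    then have "b / e \<ge> 2 * b" using e by (simp add: le_divide_eq)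
    moreover have "b / e < b" using bg \<open>norm x = b\<close> by simp
    ultimately show False using b0 by linarith
  qed
  then show ?thesis by (meson bdd_below_def)
qed

lemma S_closed: "closed (S x)"
proof -
  have "continuous_on UNIV (\<lambda>a::real. a *\<^sub>R v - x)" by (intro continuous_intros)
  then have "closed ((\<lambda>a::real. a *\<^sub>R v - x) -` K)"
    using K_closed by (simp add: closed_vimage continuous_on_eq_continuous_within)
  then show ?thesis unfolding S_def by (simp add: vimage_def)
qed

lemma V_eq: "Vfun K v x = Inf (S x)"
  unfolding Vfun_def S_def kle_def by simp

lemma V_mem: "Vfun K v x *\<^sub>R v - x \<in> K"
  using closed_contains_Inf[OF S_ne S_bdd S_closed, of x] unfolding V_eq S_def by simp

lemma V_lower: "a *\<^sub>R v - x \<in> K \<Longrightarrow> Vfun K v x \<le> a"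
  unfolding V_eq by (rule cInf_lower[OF _ S_bdd]) (simp add: S_def)

lemma V_smult: "Vfun K v (a *\<^sub>R v) = a"
proof -
  have "b \<ge> a" if "b *\<^sub>R v - a *\<^sub>R v \<in> K" for b
  proof (rule ccontr)
    assume "\<not> b \<ge> a"
    then have "(a - b) *\<^sub>R v \<in> K" using v_int interior_subset scal[of v "a - b"] by auto
    moreover have "- ((a - b) *\<^sub>R v) \<in> K" using that by (simp add: algebra_simps)
    ultimately have "(a - b) *\<^sub>R v = 0" using pointed by blast
    then show False using v_ne \<open>\<not> b \<ge> a\<close> by simp
  qed
  moreover have "a *\<^sub>R v - a *\<^sub>R v \<in> K" using scal[of v 0] v_int interior_subset by auto
  ultimately show ?thesis unfolding V_eq S_def
    by (intro cInf_eq_minimum) auto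
qed

lemma V_strict: "a *\<^sub>R v - y \<in> interior K \<Longrightarrow> Vfun K v y < a"
proof -
  assume h: "a *\<^sub>R v - y \<in> interior K"
  obtain e where e: "e > 0" "ball (a *\<^sub>R v - y) e \<subseteq> K"
    using h by (meson open_contains_ball_eq open_interior interior_subset subset_trans)
  have "dist (a *\<^sub>R v - y) ((a - e/2) *\<^sub>R v - y) = e/2"
    using v_norm e by (simp add: dist_norm algebra_simps)
  then have "(a - e/2) *\<^sub>R v - y \<in> K" using e by auto
  then have "Vfun K v y \<le> a - e/2" by (rule V_lower)
  then show ?thesis using e by simp
qed

end

theorem lemma3:
  fixes X :: "(real ^ 'n) set" and f :: "real ^ 'n \<Rightarrow> real ^ 'n"
    and phi :: "real \<Rightarrow> real ^ 'n \<Rightarrow> real ^ 'n"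
    and K :: "(real ^ 'n) set" and v :: "real ^ 'n"
  assumes X_closed: "closed X"
    and X_reg: "X = closure (interior X)"
    and f_lip: "locally_lipschitz_on X f"
    and fc: "forward_complete_flow f X phi"
    and K_add: "\<forall>x\<in>K. \<forall>y\<in>K. x + y \<in> K"
    and K_cone: "cone K"
    and K_pointed: "K \<inter> uminus ` K = {0}"
    and K_closed: "closed K"
    and K_convex: "convex K"
    and K_int: "interior K \<noteq> {}"
    and strong_mono: "\<forall>xi1\<in>X. \<forall>xi2\<in>X. klt K xi2 xi1 \<longrightarrow>
                        (\<forall>t>0. kll K (phi t xi2) (phi t xi1))"
    and v_int: "v \<in> interior K"
    and v_norm: "norm v = 1"
    and X_transl: "\<forall>xi\<in>X. \<forall>c::real. xi + c *\<^sub>R v \<in> X"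
    and phi_transl: "\<forall>c::real. \<forall>xi\<in>X. \<forall>t\<ge>0. phi t (xi + c *\<^sub>R v) = phi t xi + c *\<^sub>R v"
  shows "\<forall>xi1\<in>X. \<forall>xi2\<in>X. \<forall>t>0.
           Vfun K v (phi t xi1 - phi t xi2) \<le> Vfun K v (xi1 - xi2) \<and>
           (xi1 - xi2 \<notin> span {v} \<longrightarrow> Vfun K v (phi t xi1 - phi t xi2) < Vfun K v (xi1 - xi2))"
proof (intro ballI allI impI)
  interpret kcone K v using assms by unfold_locales auto
  fix xi1 xi2 and t :: real
  assume x1: "xi1 \<in> X" and x2: "xi2 \<in> X" and t: "t > 0"
  define a where "a = Vfun K v (xi1 - xi2)"
  define xi3 where "xi3 = xi2 + a *\<^sub>R v"
  have x3: "xi3 \<in> X" using X_transl x2 unfolding xi3_def by blast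
  have p3: "phi t xi3 = phi t xi2 + a *\<^sub>R v" using phi_transl x2 t unfolding xi3_def by auto
  have mem: "xi3 - xi1 \<in> K" using V_mem[of "xi1 - xi2"] unfolding xi3_def a_def
    by (simp add: algebra_simps)
  show "Vfun K v (phi t xi1 - phi t xi2) \<le> a \<and>
    (xi1 - xi2 \<notin> span {v} \<longrightarrow> Vfun K v (phi t xi1 - phi t xi2) < a)"
  proof (cases "xi1 = xi3")
    case True
    then have "phi t xi1 - phi t xi2 = a *\<^sub>R v" using p3 by simp
    moreover have "xi1 - xi2 \<in> span {v}" using True unfolding xi3_def
      by (simp add: span_base span_scale)
    ultimately show ?thesis using V_smult by simp
  next
    case False
    then have "klt K xi1 xi3" unfolding klt_def kle_def using mem by simp
    then have "kll K (phi t xi1) (phi t xi3)" using strong_mono x1 x3 t by blast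
    then have "a *\<^sub>R v - (phi t xi1 - phi t xi2) \<in> interior K"
      unfolding kll_def p3 by (simp add: algebra_simps)
    then have "Vfun K v (phi t xi1 - phi t xi2) < a" by (rule V_strict)
    then show ?thesis by simp
  qed
qed

end
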